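(* Let $\hat T=\exp\big(K_x\sum_{x\text{-links}}\hat\sigma^x_v\hat\sigma^x_w\big)\exp\big(K_y\sum_{y\text{-links}}\hat\sigma^y_v\hat\sigma^y_w\big)\exp\big(K_z\sum_{z\text{-links}}\hat\sigma^z_v\hat\sigma^z_w\big)$, acting on $(\mathbb{C}^2)^{\otimes V}$ with one qubit per vertex of $G$ and Pauli matrices $\hat\sigma^\alpha_v$. Let $K_x,K_y,K_z\in\mathbb{C}$ and suppose $\beta J_\perp,\beta h\in\mathbb{C}$ satisfy $4\beta J_\perp\equiv\pi i\pmod{2\pi i}$ and $2\beta h\equiv\pi i/2\pmod{2\pi i}$. Then $$\mathrm{Tr}[\hat T^M]=c\;Z(K_x,K_y,K_z,\beta J_\perp,\beta h)$$ for a nonzero constant $c$ depending only on $M,N,\beta J_\perp,\beta h$ (not on $K_x,K_y,K_z$). In particular, for $\beta J_\perp=\beta h=\pi i/4$ one has $c=(2^{-1/2}e^{3\pi i/4})^{12MN}$.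
   Context: Let $G$ be the brick-wall graph: integers $L_x,L_y\ge1$, $N=L_xL_y$, $\Gamma=\mathbb{Z}_{L_x}\times\mathbb{Z}_{L_y}$, $e_x=(1,0)$, $e_y=(0,1)$; vertex set $V=\Gamma\times\{0,1,2,3\}$; edges for all $r\in\Gamma$: $x$-links $\{(r,0),(r,1)\},\{(r,2),(r,3)\}$; $y$-links $\{(r,0),(r-e_y,1)\},\{(r,2),(r+e_y,3)\}$; $z$-links $\{(r,2),(r,1)\},\{(r,0),(r-e_x,3)\}$. The 3D lattice has $3M$ planes indexed by $t\in\mathbb{Z}_{3M}$, each a copy of $V$; plane $t$ has type $x$, $y$, $z$ according as $t\equiv0,1,2\pmod 3$. Classical spins $\sigma_{t,v}\in\{\pm1\}$. Horizontal links: in a plane of type $\alpha$, pairs $\{(t,v),(t,w)\}$ with $\{v,w\}$ an $\alpha$-link of $G$; denote the set of these over all planes of type $\alpha$ by $\mathbf X,\mathbf Y,\mathbf Z$ for $\alpha=x,y,z$. Vertical links $\boldsymbol\perp$: all pairs $\{(t,v),(t+1,v)\}$. With $K_\alpha=\beta J_\alpha$, $$Z(K_x,K_y,K_z,\beta J_\perp,\beta h)=\sum_{\{\sigma\}}\exp\Big(\sum_{\alpha\in\{x,y,z\}}K_\alpha\!\!\sum_{\langle ij\rangle\in\mathbf{A}_\alpha}\!\!\sigma_i\sigma_j+\beta J_\perp\!\!\sum_{\langle ij\rangle\in\boldsymbol\perp}\!\!\sigma_i\sigma_j-\beta h\sum_i\sigma_i\Big),$$ with $\mathbf A_x=\mathbf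 X,\mathbf A_y=\mathbf Y,\mathbf A_z=\mathbf Z$. *)

theory Defs
  imports "HOL-Analysis.Analysis"
begin

text \<open>Vertices (a,b,k) with a < Lx, b < Ly (an element of Z_Lx x Z_Ly) and k < 4.\<close>
type_synonym vtx = "nat \<times> nat \<times> nat"

datatype axis = AX | AY | AZ

definition verts :: "nat \<Rightarrow> nat \<Rightarrow> vtx set" where
  "verts Lx Ly = {(a,b,k). a < Lx \<and> b < Ly \<and> k < 4}"

text \<open>Edges of G of each type, as (ordered) pairs of vertices; each edge listed once.
  Shifts r - e_x, r + e_y, r - e_y are taken modulo Lx resp. Ly.\<close>
definition links :: "nat \<Rightarrow> nat \<Rightarrow> axis \<Rightarrow> (vtx \<times> vtx) set" where
  "links Lx Ly \<alpha> = (case \<alpha> of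
     AX \<Rightarrow> (\<Union>a\<in>{..<Lx}. \<Union>b\<in>{..<Ly}.
             {((a,b,0),(a,b,1)), ((a,b,2),(a,b,3))})
   | AY \<Rightarrow> (\<Union>a\<in>{..<Lx}. \<Union>b\<in>{..<Ly}.
             {((a,b,0),(a,(b + Ly - 1) mod Ly,1)), ((a,b,2),(a,(b + 1) mod Ly,3))})
   | AZ \<Rightarrow> (\<Union>a\<in>{..<Lx}. \<Union>b\<in>{..<Ly}.
             {((a,b,2),(a,b,1)), ((a,b,0),((a + Lx - 1) mod Lx,b,3))}))"

text \<open>Computational basis states: functions s : V -> bool (True = |1>), extended by False
  outside V.  Operators are matrices in this basis: A t s = <t|A|s>.\<close>
type_synonym 'v op = "('v \<Rightarrow> bool) \<Rightarrow> ('v \<Rightarrow> bool) \<Rightarrow> complex"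

definition basis :: "'v set \<Rightarrow> ('v \<Rightarrow> bool) set" where
  "basis Vs = {s. \<forall>v. v \<notin> Vs \<longrightarrow> s v = False}"

definition op_mult :: "'v set \<Rightarrow> 'v op \<Rightarrow> 'v op \<Rightarrow> 'v op" where
  "op_mult Vs A B = (\<lambda>t s. \<Sum>u\<in>basis Vs. A t u * B u s)"

definition op_id :: "'v op" where
  "op_id = (\<lambda>t s. if t = s then 1 else 0)"

definition op_add :: "'v op \<Rightarrow> 'v op \<Rightarrow> 'v op" where
  "op_add A B = (\<lambda>t s. A t s + B t s)"

definition op_scale :: "complex \<Rightarrow> 'v op \<Rightarrow> 'v op" where
  "op_scale c A = (\<lambda>t s. c * A t s)"

fun op_pow :: "'v set \<Rightarrow> 'v op \<Rightarrow> nat \<Rightarrow> 'v op" where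
  "op_pow Vs A 0 = op_id"
| "op_pow Vs A (Suc k) = op_mult Vs (op_pow Vs A k) A"

definition op_exp :: "'v set \<Rightarrow> 'v op \<Rightarrow> 'v op" where
  "op_exp Vs A = (\<lambda>t s. (\<Sum>k. op_pow Vs A k t s / of_nat (fact k)))"

definition op_trace :: "'v set \<Rightarrow> 'v op \<Rightarrow> complex" where
  "op_trace Vs A = (\<Sum>s\<in>basis Vs. A s s)"

text \<open>Single-qubit Pauli matrices, entry (out, in), with False = |0>, True = |1>.\<close>
fun pauli :: "axis \<Rightarrow> bool \<Rightarrow> bool \<Rightarrow> complex" where
  "pauli AX t s = (if t \<noteq> s then 1 else 0)"
| "pauli AY t s = (if t \<and> \<not> s then \<i> else if \<not> t \<and> s then - \<i> else 0)"
| "pauli AZ t s = (if t = s then (if s then -1 else 1) else 0)"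

definition pauli_at :: "axis \<Rightarrow> 'v \<Rightarrow> 'v op" where
  "pauli_at \<alpha> v = (\<lambda>t s. pauli \<alpha> (t v) (s v) * (if \<forall>u. u \<noteq> v \<longrightarrow> t u = s u then 1 else 0))"

definition link_sum :: "nat \<Rightarrow> nat \<Rightarrow> axis \<Rightarrow> vtx op" where
  "link_sum Lx Ly \<alpha> = (\<lambda>t s. \<Sum>(v,w)\<in>links Lx Ly \<alpha>.
      op_mult (verts Lx Ly) (pauli_at \<alpha> v) (pauli_at \<alpha> w) t s)"

definition transfer :: "nat \<Rightarrow> nat \<Rightarrow> complex \<Rightarrow> complex \<Rightarrow> complex \<Rightarrow> vtx op" where
  "transfer Lx Ly Kx Ky Kz =
     (let Vs = verts Lx Ly in
      op_mult Vs (op_mult Vs (op_exp Vs (op_scale Kx (link_sum Lx Ly AX)))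
                             (op_exp Vs (op_scale Ky (link_sum Lx Ly AY))))
                 (op_exp Vs (op_scale Kz (link_sum Lx Ly AZ))))"

definition plane_type :: "nat \<Rightarrow> axis" where
  "plane_type t = (if t mod 3 = 0 then AX else if t mod 3 = 1 then AY else AZ)"

definition coupling :: "complex \<Rightarrow> complex \<Rightarrow> complex \<Rightarrow> axis \<Rightarrow> complex" where
  "coupling Kx Ky Kz \<alpha> = (case \<alpha> of AX \<Rightarrow> Kx | AY \<Rightarrow> Ky | AZ \<Rightarrow> Kz)"

text \<open>Sites (t, v) with t in Z_{3M} (represented by t < 3M) and v in V.\<close>
definition sites :: "nat \<Rightarrow> nat \<Rightarrow> nat \<Rightarrow> (nat \<times> vtx) set" where
  "sites Lx Ly M = {..<3*M} \<times> verts Lx Ly"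

definition spin_configs :: "nat \<Rightarrow> nat \<Rightarrow> nat \<Rightarrow> (nat \<times> vtx \<Rightarrow> int) set" where
  "spin_configs Lx Ly M = {\<sigma>. (\<forall>i\<in>sites Lx Ly M. \<sigma> i \<in> {-1, 1}) \<and>
                                (\<forall>i. i \<notin> sites Lx Ly M \<longrightarrow> \<sigma> i = 1)}"

definition energy :: "nat \<Rightarrow> nat \<Rightarrow> nat \<Rightarrow> complex \<Rightarrow> complex \<Rightarrow> complex \<Rightarrow> complex \<Rightarrow> complex
                      \<Rightarrow> (nat \<times> vtx \<Rightarrow> int) \<Rightarrow> complex" where
  "energy Lx Ly M Kx Ky Kz bJ bh \<sigma> =
     (\<Sum>t<3*M. coupling Kx Ky Kz (plane_type t) *
        (\<Sum>(v,w)\<in>links Lx Ly (plane_type t). of_int (\<sigma> (t,v) * \<sigma> (t,w))))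
     + bJ * (\<Sum>t<3*M. \<Sum>v\<in>verts Lx Ly. of_int (\<sigma> (t,v) * \<sigma> ((t + 1) mod (3*M), v)))
     - bh * (\<Sum>i\<in>sites Lx Ly M. of_int (\<sigma> i))"

definition partition_fn :: "nat \<Rightarrow> nat \<Rightarrow> nat \<Rightarrow> complex \<Rightarrow> complex \<Rightarrow> complex \<Rightarrow> complex \<Rightarrow> complex
                            \<Rightarrow> complex" where
  "partition_fn Lx Ly M Kx Ky Kz bJ bh =
     (\<Sum>\<sigma>\<in>spin_configs Lx Ly M. exp (energy Lx Ly M Kx Ky Kz bJ bh \<sigma>))"

end

theory Submission
  imports Defs
begin


lemma basis_eq: "basis Vs = (\<lambda>A v. v \<in> A) ` Pow Vs"
proof
  show "basis Vs \<subseteq> (\<lambda>A v. v \<in> A) ` Pow Vs"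
  proof
    fix s assume "s \<in> basis Vs"
    then have "s = (\<lambda>v. v \<in> {v\<in>Vs. s v})" by (auto simp: basis_def)
    then show "s \<in> (\<lambda>A v. v \<in> A) ` Pow Vs" by blast
  qed
qed (auto simp: basis_def)

lemma finite_basis: "finite Vs \<Longrightarrow> finite (basis Vs)"
  by (simp add: basis_eq)

definition eqB :: "'v set \<Rightarrow> 'v op \<Rightarrow> 'v op \<Rightarrow> bool" where
  "eqB Vs A B \<longleftrightarrow> (\<forall>t\<in>basis Vs. \<forall>s\<in>basis Vs. A t s = B t s)"

lemma eqB_refl[simp]: "eqB Vs A A" by (simp add: eqB_def)
lemma eqB_sym: "eqB Vs A B \<Longrightarrow> eqB Vs B A" by (simp add: eqB_def)
lemma eqB_trans[trans]: "eqB Vs A B \<Longrightarrow> eqB Vs B C \<Longrightarrow> eqB Vs A C" by (simp add: eqB_def)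
lemma eqB_trans'[trans]: "A = B \<Longrightarrow> eqB Vs B C \<Longrightarrow> eqB Vs A C" by simp
lemma eqB_trans''[trans]: "eqB Vs A B \<Longrightarrow> B = C \<Longrightarrow> eqB Vs A C" by simp

lemma op_mult_cong: "eqB Vs A A' \<Longrightarrow> eqB Vs B B' \<Longrightarrow> eqB Vs (op_mult Vs A B) (op_mult Vs A' B')"
  by (simp add: eqB_def op_mult_def)

lemma op_mult_assoc:
  assumes "finite Vs"
  shows "op_mult Vs (op_mult Vs A B) C = op_mult Vs A (op_mult Vs B C)"
proof (intro ext)
  fix t s
  have "op_mult Vs (op_mult Vs A B) C t s = (\<Sum>u\<in>basis Vs. \<Sum>w\<in>basis Vs. A t w * B w u * C u s)"
    by (simp add: op_mult_def sum_distrib_right)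
  also have "\<dots> = (\<Sum>w\<in>basis Vs. \<Sum>u\<in>basis Vs. A t w * B w u * C u s)"
    by (rule sum.swap)
  also have "\<dots> = op_mult Vs A (op_mult Vs B C) t s"
    by (simp add: op_mult_def sum_distrib_left mult.assoc)
  finally show "op_mult Vs (op_mult Vs A B) C t s = op_mult Vs A (op_mult Vs B C) t s" .
qed

lemma ite01_mult[simp]: "(if P then 1 else 0) * (x::complex) = (if P then x else 0)"
  "x * (if P then 1 else 0) = (if P then x else 0)" by auto

lemma op_mult_id_left: "finite Vs \<Longrightarrow> eqB Vs (op_mult Vs op_id A) A"
  by (simp add: eqB_def op_mult_def op_id_def finite_basis)

lemma op_mult_id_right: "finite Vs \<Longrightarrow> eqB Vs (op_mult Vs A op_id) A"
  by (simp add: eqB_def op_mult_def op_id_def finite_basis)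

lemma op_pow_cong: "eqB Vs A B \<Longrightarrow> eqB Vs (op_pow Vs A k) (op_pow Vs B k)"
  by (induction k) (auto intro: op_mult_cong)

lemma op_exp_cong: "eqB Vs A B \<Longrightarrow> eqB Vs (op_exp Vs A) (op_exp Vs B)"
  using op_pow_cong[of Vs A B] by (simp add: eqB_def op_exp_def)

lemma op_scale_cong: "eqB Vs A B \<Longrightarrow> eqB Vs (op_scale c A) (op_scale c B)"
  by (simp add: eqB_def op_scale_def)

lemma op_trace_cong: "eqB Vs A B \<Longrightarrow> op_trace Vs A = op_trace Vs B"
  by (simp add: eqB_def op_trace_def)

lemma op_trace_comm:
  "op_trace Vs (op_mult Vs A B) = op_trace Vs (op_mult Vs B A)"
  unfolding op_trace_def op_mult_def
  by (subst sum.swap) (simp add: mult.commute)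

lemma sum_swap3: "(\<Sum>u\<in>A. \<Sum>n\<in>A. \<Sum>m\<in>A. f u n m) = (\<Sum>m\<in>A. \<Sum>n\<in>A. \<Sum>u\<in>A. f u n m)"
proof -
  have "(\<Sum>u\<in>A. \<Sum>n\<in>A. \<Sum>m\<in>A. f u n m) = (\<Sum>u\<in>A. \<Sum>m\<in>A. \<Sum>n\<in>A. f u n m)"
    by (intro sum.cong refl sum.swap)
  also have "\<dots> = (\<Sum>m\<in>A. \<Sum>u\<in>A. \<Sum>n\<in>A. f u n m)" by (rule sum.swap)
  also have "\<dots> = (\<Sum>m\<in>A. \<Sum>n\<in>A. \<Sum>u\<in>A. f u n m)"
    by (intro sum.cong refl sum.swap)
  finally show ?thesis .
qed

definition UDW :: "'v set \<Rightarrow> 'v op \<Rightarrow> (('v \<Rightarrow> bool) \<Rightarrow> complex) \<Rightarrow> 'v op \<Rightarrow> 'v op" where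
  "UDW Vs U d W = (\<lambda>t s. \<Sum>u\<in>basis Vs. U t u * d u * W u s)"

definition diagop :: "(('v \<Rightarrow> bool) \<Rightarrow> complex) \<Rightarrow> 'v op" where
  "diagop d = (\<lambda>t s. if t = s then d s else 0)"

lemma UDW_mult: "finite Vs \<Longrightarrow> op_mult Vs (op_mult Vs U (diagop d)) W = UDW Vs U d W"
proof (intro ext)
  fix t s assume "finite Vs"
  have "op_mult Vs (op_mult Vs U (diagop d)) W t s = (\<Sum>u\<in>basis Vs. (\<Sum>n\<in>basis Vs. if n = u then U t u * d u else 0) * W u s)"
    unfolding op_mult_def diagop_def by (intro sum.cong refl arg_cong2[where f="(*)"]) auto
  also have "\<dots> = UDW Vs U d W t s" using \<open>finite Vs\<close> by (simp add: UDW_def finite_basis)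
  finally show "op_mult Vs (op_mult Vs U (diagop d)) W t s = UDW Vs U d W t s" .
qed

lemma UDW_pow:
  assumes fin: "finite Vs" and WU: "eqB Vs (op_mult Vs W U) op_id" and UW: "eqB Vs (op_mult Vs U W) op_id"
  shows "eqB Vs (op_pow Vs (UDW Vs U d W) k) (UDW Vs U (\<lambda>u. d u ^ k) W)"
proof (induction k)
  case 0
  show ?case using UW by (simp add: eqB_def UDW_def op_mult_def)
next
  case (Suc k)
  have "eqB Vs (op_pow Vs (UDW Vs U d W) (Suc k)) (op_mult Vs (UDW Vs U (\<lambda>u. d u ^ k) W) (UDW Vs U d W))"
    using Suc by (simp add: op_mult_cong)
  also have "eqB Vs \<dots> (UDW Vs U (\<lambda>u. d u ^ Suc k) W)"
    unfolding eqB_def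
  proof (intro ballI)
    fix t s assume t: "t \<in> basis Vs" and s: "s \<in> basis Vs"
    have "op_mult Vs (UDW Vs U (\<lambda>u. d u ^ k) W) (UDW Vs U d W) t s
       = (\<Sum>a\<in>basis Vs. \<Sum>b\<in>basis Vs. U t a * d a ^ k * (\<Sum>u\<in>basis Vs. W a u * U u b) * d b * W b s)"
      unfolding op_mult_def UDW_def
      by (simp add: sum_distrib_left sum_distrib_right mult.assoc mult.left_commute)
         (rule sum_swap3)
    also have "\<dots> = (\<Sum>a\<in>basis Vs. \<Sum>b\<in>basis Vs. U t a * d a ^ k * (if a = b then 1 else 0) * d b * W b s)"
      using WU by (intro sum.cong refl) (simp add: eqB_def op_mult_def op_id_def)
    also have "\<dots> = UDW Vs U (\<lambda>u. d u ^ Suc k) W t s"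
    proof -
      have "\<And>a. a \<in> basis Vs \<Longrightarrow> (\<Sum>b\<in>basis Vs. U t a * d a ^ k * (if a = b then 1 else 0) * d b * W b s) = U t a * d a ^ Suc k * W a s"
        using fin by (simp add: finite_basis if_distrib[where f="\<lambda>x. x * _"] cong: if_cong)
      then show ?thesis by (simp add: UDW_def)
    qed
    finally show "op_mult Vs (UDW Vs U (\<lambda>u. d u ^ k) W) (UDW Vs U d W) t s = UDW Vs U (\<lambda>u. d u ^ Suc k) W t s" .
  qed
  finally show ?case .
qed

lemma exp_series: "(\<lambda>n. (z::complex) ^ n / of_nat (fact n)) sums exp z"
  using exp_converges[of z] by (simp add: scaleR_conv_of_real divide_inverse mult.commute)

lemma UDW_exp:
  assumes fin: "finite Vs" and WU: "eqB Vs (op_mult Vs W U) op_id" and UW: "eqB Vs (op_mult Vs U W) op_id"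
  shows "eqB Vs (op_exp Vs (UDW Vs U d W)) (UDW Vs U (\<lambda>u. exp (d u)) W)"
  unfolding eqB_def
proof (intro ballI)
  fix t s assume t: "t \<in> basis Vs" and s: "s \<in> basis Vs"
  have "(\<lambda>k. op_pow Vs (UDW Vs U d W) k t s / of_nat (fact k))
      = (\<lambda>k. \<Sum>u\<in>basis Vs. U t u * ((d u) ^ k / of_nat (fact k)) * W u s)"
    using UDW_pow[OF fin WU UW, of d] t s
    by (auto simp: eqB_def UDW_def sum_divide_distrib)
  moreover have "(\<lambda>k. \<Sum>u\<in>basis Vs. U t u * ((d u) ^ k / of_nat (fact k)) * W u s) sums
       (\<Sum>u\<in>basis Vs. U t u * exp (d u) * W u s)"
    by (intro sums_sum sums_mult sums_mult2 exp_series)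
  ultimately show "op_exp Vs (UDW Vs U d W) t s = UDW Vs U (\<lambda>u. exp (d u)) W t s"
    by (simp add: op_exp_def UDW_def sums_iff)
qed



definition m2 :: "(bool \<Rightarrow> bool \<Rightarrow> complex) \<Rightarrow> (bool \<Rightarrow> bool \<Rightarrow> complex) \<Rightarrow> (bool \<Rightarrow> bool \<Rightarrow> complex)" where
  "m2 f g = (\<lambda>a b. f a False * g False b + f a True * g True b)"

definition id2 :: "bool \<Rightarrow> bool \<Rightarrow> complex" where
  "id2 = (\<lambda>a b. if a = b then 1 else 0)"

definition tens :: "'v set \<Rightarrow> ('v \<Rightarrow> bool \<Rightarrow> bool \<Rightarrow> complex) \<Rightarrow> 'v op" where
  "tens Vs f = (\<lambda>t s. \<Prod>v\<in>Vs. f v (t v) (s v))"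

lemma basis_insert:
  assumes "x \<notin> Vs"
  shows "basis (insert x Vs) = basis Vs \<union> (\<lambda>u. u(x := True)) ` basis Vs"
proof
  show "basis (insert x Vs) \<subseteq> basis Vs \<union> (\<lambda>u. u(x := True)) ` basis Vs"
  proof
    fix s assume s: "s \<in> basis (insert x Vs)"
    show "s \<in> basis Vs \<union> (\<lambda>u. u(x := True)) ` basis Vs"
    proof (cases "s x")
      case True
      then have "s = (s(x := False))(x := True)" by (auto simp: fun_eq_iff)
      moreover have "s(x := False) \<in> basis Vs" using s by (auto simp: basis_def)
      ultimately show ?thesis by blast
    next
      case False
      then have "s \<in> basis Vs" using s by (auto simp: basis_def)
      then show ?thesis by blast
    qed
  qed
qed (auto simp: basis_def)

lemma sum_prod_basis:
  fixes F :: "'v \<Rightarrow> bool \<Rightarrow> complex"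
  assumes "finite Vs"
  shows "(\<Sum>u\<in>basis Vs. \<Prod>v\<in>Vs. F v (u v)) = (\<Prod>v\<in>Vs. F v False + F v True)"
  using assms
proof (induction Vs rule: finite_induct)
  case empty
  have "basis {} = {\<lambda>v. False}" by (auto simp: basis_def)
  then show ?case by (subst \<open>basis {} = {\<lambda>v. False}\<close>) simp
next
  case (insert x Vs)
  have fb: "finite (basis Vs)" using insert by (simp add: finite_basis)
  have disj: "basis Vs \<inter> (\<lambda>u. u(x := True)) ` basis Vs = {}"
    using insert by (auto simp: basis_def)
  have inj: "inj_on (\<lambda>u. u(x := True)) (basis Vs)"
  proof (rule inj_onI)
    fix a b assume a: "a \<in> basis Vs" and b: "b \<in> basis Vs" and e: "a(x := True) = b(x := True)"
    show "a = b"
    proof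
      fix v show "a v = b v"
        using fun_cong[OF e, of v] a b insert(2) by (cases "v = x") (auto simp: basis_def)
    qed
  qed
  have "(\<Sum>u\<in>basis (insert x Vs). \<Prod>v\<in>insert x Vs. F v (u v))
      = (\<Sum>u\<in>basis Vs. \<Prod>v\<in>insert x Vs. F v (u v)) + (\<Sum>u\<in>(\<lambda>u. u(x := True)) ` basis Vs. \<Prod>v\<in>insert x Vs. F v (u v))"
    unfolding basis_insert[OF insert(2)] using fb disj by (simp add: sum.union_disjoint)
  also have "(\<Sum>u\<in>basis Vs. \<Prod>v\<in>insert x Vs. F v (u v)) = F x False * (\<Sum>u\<in>basis Vs. \<Prod>v\<in>Vs. F v (u v))"
  proof -
    have "\<And>u. u \<in> basis Vs \<Longrightarrow> (\<Prod>v\<in>insert x Vs. F v (u v)) = F x False * (\<Prod>v\<in>Vs. F v (u v))"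
      using insert by (auto simp: basis_def)
    then have "(\<Sum>u\<in>basis Vs. \<Prod>v\<in>insert x Vs. F v (u v)) = (\<Sum>u\<in>basis Vs. F x False * (\<Prod>v\<in>Vs. F v (u v)))"
      by (rule sum.cong[OF refl])
    then show ?thesis by (simp only: sum_distrib_left)
  qed
  also have "(\<Sum>u\<in>(\<lambda>u. u(x := True)) ` basis Vs. \<Prod>v\<in>insert x Vs. F v (u v)) = F x True * (\<Sum>u\<in>basis Vs. \<Prod>v\<in>Vs. F v (u v))"
  proof -
    have "(\<Sum>u\<in>(\<lambda>u. u(x := True)) ` basis Vs. \<Prod>v\<in>insert x Vs. F v (u v))
        = (\<Sum>u\<in>basis Vs. \<Prod>v\<in>insert x Vs. F v ((u(x := True)) v))"
      using inj by (simp add: sum.reindex)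
    also have "\<dots> = (\<Sum>u\<in>basis Vs. F x True * (\<Prod>v\<in>Vs. F v (u v)))"
    proof (intro sum.cong refl)
      fix u assume "u \<in> basis Vs"
      have "(\<Prod>v\<in>Vs. F v ((u(x := True)) v)) = (\<Prod>v\<in>Vs. F v (u v))"
        using insert(2) by (intro prod.cong refl) auto
      then show "(\<Prod>v\<in>insert x Vs. F v ((u(x := True)) v)) = F x True * (\<Prod>v\<in>Vs. F v (u v))"
        using insert by simp
    qed
    finally show ?thesis by (simp add: sum_distrib_left)
  qed
  finally show ?case using insert by (simp add: distrib_right)
qed

lemma tens_mult:
  assumes "finite Vs"
  shows "op_mult Vs (tens Vs f) (tens Vs g) = tens Vs (\<lambda>v. m2 (f v) (g v))"
proof (intro ext)
  fix t s
  have "op_mult Vs (tens Vs f) (tens Vs g) t s = (\<Sum>u\<in>basis Vs. \<Prod>v\<in>Vs. f v (t v) (u v) * g v (u v) (s v))"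
    by (simp add: op_mult_def tens_def prod.distrib)
  also have "\<dots> = tens Vs (\<lambda>v. m2 (f v) (g v)) t s"
    using sum_prod_basis[OF assms, of "\<lambda>v c. f v (t v) c * g v c (s v)"]
    by (simp add: tens_def m2_def)
  finally show "op_mult Vs (tens Vs f) (tens Vs g) t s = tens Vs (\<lambda>v. m2 (f v) (g v)) t s" .
qed

lemma basis_eq_iff: "t \<in> basis Vs \<Longrightarrow> s \<in> basis Vs \<Longrightarrow> (t = s) \<longleftrightarrow> (\<forall>v\<in>Vs. t v = s v)"
  by (auto simp: basis_def fun_eq_iff)

lemma tens_diag:
  assumes "finite Vs"
  shows "eqB Vs (tens Vs (\<lambda>v a b. if a = b then e v b else 0)) (diagop (\<lambda>s. \<Prod>v\<in>Vs. e v (s v)))"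
  unfolding eqB_def
proof (intro ballI)
  fix t s assume t: "t \<in> basis Vs" and s: "s \<in> basis Vs"
  show "tens Vs (\<lambda>v a b. if a = b then e v b else 0) t s = diagop (\<lambda>s. \<Prod>v\<in>Vs. e v (s v)) t s"
  proof (cases "t = s")
    case True then show ?thesis by (simp add: tens_def diagop_def)
  next
    case False
    then obtain v where "v \<in> Vs" "t v \<noteq> s v" using basis_eq_iff[OF t s] by blast
    then show ?thesis using False assms by (simp add: tens_def diagop_def prod_zero_iff) blast
  qed
qed

lemma tens_id:
  assumes "finite Vs"
  shows "eqB Vs (tens Vs (\<lambda>_. id2)) op_id"
  using tens_diag[OF assms, of "\<lambda>_ _. 1"] by (simp add: id2_def diagop_def op_id_def eqB_def)

lemma pauli_at_tens:
  assumes "finite Vs" "v \<in> Vs"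
  shows "eqB Vs (pauli_at \<alpha> v) (tens Vs (\<lambda>u. if u = v then pauli \<alpha> else id2))"
  unfolding eqB_def
proof (intro ballI)
  fix t s assume t: "t \<in> basis Vs" and s: "s \<in> basis Vs"
  have "tens Vs (\<lambda>u. if u = v then pauli \<alpha> else id2) t s
      = pauli \<alpha> (t v) (s v) * (\<Prod>u\<in>Vs - {v}. id2 (t u) (s u))"
    using assms by (simp add: tens_def prod.remove)
  also have "(\<Prod>u\<in>Vs - {v}. id2 (t u) (s u)) = (if \<forall>u\<in>Vs - {v}. t u = s u then 1 else 0)"
    using assms by (auto simp: id2_def prod_zero_iff)
  also have "(\<forall>u\<in>Vs - {v}. t u = s u) \<longleftrightarrow> (\<forall>u. u \<noteq> v \<longrightarrow> t u = s u)"
    using t s by (auto simp: basis_def)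
  finally show "pauli_at \<alpha> v t s = tens Vs (\<lambda>u. if u = v then pauli \<alpha> else id2) t s"
    by (simp add: pauli_at_def)
qed



definition q :: complex where "q = complex_of_real (sqrt 2)"
definition om :: complex where "om = (1 + \<i>) / q"

lemma q_sq: "q * q = 2" by (simp add: q_def flip: of_real_mult)
lemma q_nz[simp]: "q \<noteq> 0" by (simp add: q_def)
lemma cnj_q[simp]: "cnj q = q" by (simp add: q_def)
lemma q_sq2: "q * (q * x) = 2 * x" by (simp add: q_sq flip: mult.assoc)
lemma q_pow2: "q ^ 2 = 2" using q_sq by (simp add: power2_eq_square)

definition Mm :: "bool \<Rightarrow> bool \<Rightarrow> complex" where
  "Mm a b = (if a = b then (if a then (-1-\<i>)/2 else (-1+\<i>)/2) else \<i>/q)"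
definition M2m :: "bool \<Rightarrow> bool \<Rightarrow> complex" where
  "M2m a b = (if a = b then (if a then (-1+\<i>)/2 else (-1-\<i>)/2) else -\<i>/q)"
definition uz :: "bool \<Rightarrow> bool \<Rightarrow> complex" where
  "uz a c = (if a = c then (if a then om else 1) else 0)"
definition ux :: "bool \<Rightarrow> bool \<Rightarrow> complex" where
  "ux a c = (if a then om else 1) * Mm a c"
definition uy :: "bool \<Rightarrow> bool \<Rightarrow> complex" where
  "uy a c = (if a then om else 1) * M2m a c"
definition uf :: "axis \<Rightarrow> bool \<Rightarrow> bool \<Rightarrow> complex" where
  "uf \<alpha> = (case \<alpha> of AX \<Rightarrow> ux | AY \<Rightarrow> uy | AZ \<Rightarrow> uz)"
definition adj :: "(bool \<Rightarrow> bool \<Rightarrow> complex) \<Rightarrow> bool \<Rightarrow> bool \<Rightarrow> complex" where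
  "adj f = (\<lambda>a c. cnj (f c a))"
definition sgc :: "bool \<Rightarrow> complex" where "sgc b = (if b then -1 else 1)"
definition dsg :: "bool \<Rightarrow> bool \<Rightarrow> complex" where "dsg a b = (if a = b then sgc b else 0)"

lemma bool_fun_eq: "(f::bool \<Rightarrow> bool \<Rightarrow> complex) = g \<longleftrightarrow>
   f False False = g False False \<and> f False True = g False True \<and> f True False = g True False \<and> f True True = g True True"
  by (auto simp: fun_eq_iff) (metis (full_types))

lemmas qsimps = m2_def id2_def Mm_def M2m_def uz_def ux_def uy_def adj_def om_def sgc_def dsg_def

lemma t1: "m2 ux (adj ux) = id2"
  unfolding bool_fun_eq by (simp add: qsimps field_simps q_sq; (simp add: algebra_simps q_sq q_sq2)?)


lemma t2: "m2 (adj ux) ux = id2"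
  unfolding bool_fun_eq by (simp add: qsimps field_simps q_sq; (simp add: algebra_simps q_sq q_sq2)?)
lemma t3: "m2 uy (adj uy) = id2"
  unfolding bool_fun_eq by (simp add: qsimps field_simps q_sq; (simp add: algebra_simps q_sq q_sq2)?)
lemma t4: "m2 (adj uy) uy = id2"
  unfolding bool_fun_eq by (simp add: qsimps field_simps q_sq; (simp add: algebra_simps q_sq q_sq2)?)
lemma t5: "m2 uz (adj uz) = id2"
  unfolding bool_fun_eq by (simp add: qsimps field_simps q_sq; (simp add: algebra_simps q_sq q_sq2)?)
lemma t6: "m2 (adj uz) uz = id2"
  unfolding bool_fun_eq by (simp add: qsimps field_simps q_sq; (simp add: algebra_simps q_sq q_sq2)?)
lemma t7: "m2 (m2 ux dsg) (adj ux) = pauli AX"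
  unfolding bool_fun_eq by (simp add: qsimps field_simps q_sq; (simp add: algebra_simps q_sq q_sq2)?)
lemma t8: "m2 (m2 uy dsg) (adj uy) = pauli AY"
  unfolding bool_fun_eq by (simp add: qsimps field_simps q_sq; (simp add: algebra_simps q_sq q_sq2)?)
lemma t9: "m2 (m2 uz dsg) (adj uz) = pauli AZ"
  unfolding bool_fun_eq by (simp add: qsimps field_simps q_sq; (simp add: algebra_simps q_sq q_sq2)?)
lemma o1: "m2 (adj ux) uy = Mm"
  unfolding bool_fun_eq by (simp add: qsimps field_simps q_sq; (simp add: algebra_simps q_sq q_sq2)?)
lemma o2: "m2 (adj uy) uz = Mm"
  unfolding bool_fun_eq by (simp add: qsimps field_simps q_sq; (simp add: algebra_simps q_sq q_sq2)?)
lemma o3: "m2 (adj uz) ux = Mm"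
  unfolding bool_fun_eq by (simp add: qsimps field_simps q_sq; (simp add: algebra_simps q_sq q_sq2)?)



lemma m2_id2_left[simp]: "m2 id2 f = f" by (simp add: bool_fun_eq m2_def id2_def)
lemma m2_id2_right[simp]: "m2 f id2 = f" by (simp add: bool_fun_eq m2_def id2_def)

lemma uf_unit1: "m2 (uf \<alpha>) (adj (uf \<alpha>)) = id2"
  by (cases \<alpha>) (simp_all add: uf_def t1 t3 t5)
lemma uf_unit2: "m2 (adj (uf \<alpha>)) (uf \<alpha>) = id2"
  by (cases \<alpha>) (simp_all add: uf_def t2 t4 t6)
lemma uf_pauli: "m2 (m2 (uf \<alpha>) dsg) (adj (uf \<alpha>)) = pauli \<alpha>"
  by (cases \<alpha>) (simp_all add: uf_def t7 t8 t9)

definition Uo :: "'v set \<Rightarrow> axis \<Rightarrow> 'v op" where "Uo Vs \<alpha> = tens Vs (\<lambda>_. uf \<alpha>)"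
definition Wo :: "'v set \<Rightarrow> axis \<Rightarrow> 'v op" where "Wo Vs \<alpha> = tens Vs (\<lambda>_. adj (uf \<alpha>))"

lemma UW_id: "finite Vs \<Longrightarrow> eqB Vs (op_mult Vs (Uo Vs \<alpha>) (Wo Vs \<alpha>)) op_id"
  using tens_id[of Vs] by (simp add: Uo_def Wo_def tens_mult uf_unit1)
lemma WU_id: "finite Vs \<Longrightarrow> eqB Vs (op_mult Vs (Wo Vs \<alpha>) (Uo Vs \<alpha>)) op_id"
  using tens_id[of Vs] by (simp add: Uo_def Wo_def tens_mult uf_unit2)

lemma link_term:
  assumes fin: "finite Vs" and v: "v \<in> Vs" and w: "w \<in> Vs" and vw: "v \<noteq> w"
  shows "eqB Vs (op_mult Vs (pauli_at \<alpha> v) (pauli_at \<alpha> w))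
                (UDW Vs (Uo Vs \<alpha>) (\<lambda>s. sgc (s v) * sgc (s w)) (Wo Vs \<alpha>))"
proof -
  define E where "E = (\<lambda>u. if u = v \<or> u = w then dsg else id2)"
  have "eqB Vs (op_mult Vs (pauli_at \<alpha> v) (pauli_at \<alpha> w))
     (op_mult Vs (tens Vs (\<lambda>u. if u = v then pauli \<alpha> else id2)) (tens Vs (\<lambda>u. if u = w then pauli \<alpha> else id2)))"
    by (intro op_mult_cong pauli_at_tens fin v w)
  also have "\<dots> = tens Vs (\<lambda>u. if u = v \<or> u = w then pauli \<alpha> else id2)"
    using vw by (simp add: tens_mult fin) (intro arg_cong[where f="tens Vs"] ext, auto)
  also have "\<dots> = tens Vs (\<lambda>u. m2 (m2 (uf \<alpha>) (E u)) (adj (uf \<alpha>)))"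
    by (intro arg_cong[where f="tens Vs"] ext) (simp add: E_def uf_pauli uf_unit1)
  also have "\<dots> = op_mult Vs (op_mult Vs (Uo Vs \<alpha>) (tens Vs E)) (Wo Vs \<alpha>)"
    by (simp add: Uo_def Wo_def tens_mult fin)
  also have "eqB Vs \<dots> (op_mult Vs (op_mult Vs (Uo Vs \<alpha>) (diagop (\<lambda>s. \<Prod>u\<in>Vs. (if u = v \<or> u = w then sgc else (\<lambda>_. 1)) (s u)))) (Wo Vs \<alpha>))"
  proof -
    have "tens Vs E = tens Vs (\<lambda>u a b. if a = b then (if u = v \<or> u = w then sgc else (\<lambda>_. 1)) b else 0)"
      by (intro arg_cong[where f="tens Vs"] ext) (simp add: E_def dsg_def id2_def)
    then show ?thesis
      using tens_diag[OF fin, of "\<lambda>u. if u = v \<or> u = w then sgc else (\<lambda>_. 1)"]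
      by (intro op_mult_cong eqB_refl) simp
  qed
  also have "\<dots> = UDW Vs (Uo Vs \<alpha>) (\<lambda>s. \<Prod>u\<in>Vs. (if u = v \<or> u = w then sgc else (\<lambda>_. 1)) (s u)) (Wo Vs \<alpha>)"
    by (simp add: UDW_mult fin)
  also have "(\<lambda>s. \<Prod>u\<in>Vs. (if u = v \<or> u = w then sgc else (\<lambda>_. 1)) (s u)) = (\<lambda>s. sgc (s v) * sgc (s w))"
  proof
    fix s
    have "(\<Prod>u\<in>Vs. (if u = v \<or> u = w then sgc else (\<lambda>_. 1)) (s u)) = (\<Prod>u\<in>Vs. (if u = v then sgc (s v) else 1) * (if u = w then sgc (s w) else 1))"
      using vw by (intro prod.cong refl) auto
    also have "\<dots> = sgc (s v) * sgc (s w)" using fin v w by (simp add: prod.distrib)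
    finally show "(\<Prod>u\<in>Vs. (if u = v \<or> u = w then sgc else (\<lambda>_. 1)) (s u)) = sgc (s v) * sgc (s w)" .
  qed
  finally show ?thesis .
qed

lemma UDW_sum: "UDW Vs U (\<lambda>s. \<Sum>l\<in>L. f l s) W t s = (\<Sum>l\<in>L. UDW Vs U (f l) W t s)"
  unfolding UDW_def by (simp add: sum_distrib_left sum_distrib_right) (rule sum.swap)

lemma UDW_scale: "op_scale K (UDW Vs U d W) = UDW Vs U (\<lambda>s. K * d s) W"
  unfolding UDW_def op_scale_def by (simp add: sum_distrib_left mult.assoc mult.left_commute)

lemma finite_verts: "finite (verts Lx Ly)"
proof -
  have "verts Lx Ly \<subseteq> {..<Lx} \<times> {..<Ly} \<times> {..<4}" by (auto simp: verts_def)
  then show ?thesis by (rule finite_subset) auto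
qed

lemma links_prop:
  assumes "Lx \<ge> 1" "Ly \<ge> 1" "(v, w) \<in> links Lx Ly \<alpha>"
  shows "v \<in> verts Lx Ly \<and> w \<in> verts Lx Ly \<and> v \<noteq> w"
  using assms by (cases \<alpha>) (auto simp: links_def verts_def)

definition hfun :: "nat \<Rightarrow> nat \<Rightarrow> axis \<Rightarrow> (vtx \<Rightarrow> bool) \<Rightarrow> complex" where
  "hfun Lx Ly \<alpha> s = (\<Sum>(v,w)\<in>links Lx Ly \<alpha>. sgc (s v) * sgc (s w))"

lemma link_sum_UDW:
  assumes "Lx \<ge> 1" "Ly \<ge> 1"
  shows "eqB (verts Lx Ly) (link_sum Lx Ly \<alpha>) (UDW (verts Lx Ly) (Uo (verts Lx Ly) \<alpha>) (hfun Lx Ly \<alpha>) (Wo (verts Lx Ly) \<alpha>))"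
  unfolding eqB_def
proof (intro ballI)
  fix t s assume t: "t \<in> basis (verts Lx Ly)" and s: "s \<in> basis (verts Lx Ly)"
  let ?V = "verts Lx Ly"
  have "link_sum Lx Ly \<alpha> t s = (\<Sum>l\<in>links Lx Ly \<alpha>. UDW ?V (Uo ?V \<alpha>) (\<lambda>s. sgc (s (fst l)) * sgc (s (snd l))) (Wo ?V \<alpha>) t s)"
    unfolding link_sum_def
  proof (intro sum.cong refl)
    fix l assume l: "l \<in> links Lx Ly \<alpha>"
    obtain v w where vw: "l = (v, w)" by (cases l)
    have "eqB ?V (op_mult ?V (pauli_at \<alpha> v) (pauli_at \<alpha> w)) (UDW ?V (Uo ?V \<alpha>) (\<lambda>s. sgc (s v) * sgc (s w)) (Wo ?V \<alpha>))"
      using links_prop[OF assms, of v w \<alpha>] l vw by (intro link_term finite_verts) auto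
    then show "(case l of (v, w) \<Rightarrow> op_mult ?V (pauli_at \<alpha> v) (pauli_at \<alpha> w) t s) = UDW ?V (Uo ?V \<alpha>) (\<lambda>s. sgc (s (fst l)) * sgc (s (snd l))) (Wo ?V \<alpha>) t s"
      using t s vw by (simp add: eqB_def)
  qed
  also have "\<dots> = UDW ?V (Uo ?V \<alpha>) (hfun Lx Ly \<alpha>) (Wo ?V \<alpha>) t s"
    unfolding UDW_sum[symmetric] hfun_def by (simp add: case_prod_beta)
  finally show "link_sum Lx Ly \<alpha> t s = UDW ?V (Uo ?V \<alpha>) (hfun Lx Ly \<alpha>) (Wo ?V \<alpha>) t s" .
qed

lemma exp_term:
  assumes "Lx \<ge> 1" "Ly \<ge> 1"
  shows "eqB (verts Lx Ly) (op_exp (verts Lx Ly) (op_scale K (link_sum Lx Ly \<alpha>)))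
    (UDW (verts Lx Ly) (Uo (verts Lx Ly) \<alpha>) (\<lambda>s. exp (K * hfun Lx Ly \<alpha> s)) (Wo (verts Lx Ly) \<alpha>))"
proof -
  let ?V = "verts Lx Ly"
  have "eqB ?V (op_exp ?V (op_scale K (link_sum Lx Ly \<alpha>))) (op_exp ?V (op_scale K (UDW ?V (Uo ?V \<alpha>) (hfun Lx Ly \<alpha>) (Wo ?V \<alpha>))))"
    by (intro op_exp_cong op_scale_cong link_sum_UDW assms)
  also have "\<dots> = op_exp ?V (UDW ?V (Uo ?V \<alpha>) (\<lambda>s. K * hfun Lx Ly \<alpha> s) (Wo ?V \<alpha>))"
    by (simp add: UDW_scale)
  also have "eqB ?V \<dots> (UDW ?V (Uo ?V \<alpha>) (\<lambda>s. exp (K * hfun Lx Ly \<alpha> s)) (Wo ?V \<alpha>))"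
    by (intro UDW_exp finite_verts WU_id UW_id)
  finally show ?thesis .
qed



fun prodn :: "'v set \<Rightarrow> (nat \<Rightarrow> 'v op) \<Rightarrow> nat \<Rightarrow> 'v op" where
  "prodn Vs A 0 = op_id"
| "prodn Vs A (Suc n) = op_mult Vs (prodn Vs A n) (A n)"

definition sl :: "(nat \<times> 'v \<Rightarrow> bool) \<Rightarrow> nat \<Rightarrow> 'v \<Rightarrow> bool" where
  "sl S t = (\<lambda>v. S (t, v))"

definition Qp :: "'v set \<Rightarrow> nat \<Rightarrow> ('v \<Rightarrow> bool) \<Rightarrow> ('v \<Rightarrow> bool) \<Rightarrow> (nat \<times> 'v \<Rightarrow> bool) set" where
  "Qp Vs k a b = {S \<in> basis ({..k} \<times> Vs). sl S 0 = a \<and> sl S k = b}"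

lemma finite_Qp: "finite Vs \<Longrightarrow> finite (Qp Vs k a b)"
  unfolding Qp_def by (rule finite_subset[of _ "basis ({..k} \<times> Vs)"]) (auto intro: finite_basis)

lemma Qp_0:
  assumes "a \<in> basis Vs"
  shows "Qp Vs 0 a b = (if a = b then {\<lambda>p. fst p = 0 \<and> a (snd p)} else {})"
proof (cases "a = b")
  case True
  have "Qp Vs 0 a b = {\<lambda>p. fst p = 0 \<and> a (snd p)}"
  proof
    show "Qp Vs 0 a b \<subseteq> {\<lambda>p. fst p = 0 \<and> a (snd p)}"
    proof
      fix S assume S: "S \<in> Qp Vs 0 a b"
      have "S (t, v) = (t = 0 \<and> a v)" for t v
          using S unfolding Qp_def basis_def sl_def
          by (cases "t = 0") (auto dest: fun_cong[where x=v])
      then have "S = (\<lambda>p. fst p = 0 \<and> a (snd p))" by auto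
      then show "S \<in> {\<lambda>p. fst p = 0 \<and> a (snd p)}" by simp
    qed
    show "{\<lambda>p. fst p = 0 \<and> a (snd p)} \<subseteq> Qp Vs 0 a b"
      using assms True by (auto simp: Qp_def basis_def sl_def)
  qed
  then show ?thesis using True by simp
next
  case False
  then show ?thesis by (auto simp: Qp_def)
qed

definition extp :: "nat \<Rightarrow> ('v \<Rightarrow> bool) \<Rightarrow> (nat \<times> 'v \<Rightarrow> bool) \<Rightarrow> (nat \<times> 'v \<Rightarrow> bool)" where
  "extp n b S = (\<lambda>p. if fst p = n then b (snd p) else S p)"

definition cutp :: "nat \<Rightarrow> (nat \<times> 'v \<Rightarrow> bool) \<Rightarrow> (nat \<times> 'v \<Rightarrow> bool)" where
  "cutp n S = (\<lambda>p. if fst p = n then False else S p)"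

lemma prodn_paths:
  assumes fin: "finite Vs"
  shows "a \<in> basis Vs \<Longrightarrow> b \<in> basis Vs \<Longrightarrow>
    prodn Vs A k a b = (\<Sum>S\<in>Qp Vs k a b. \<Prod>t<k. A t (sl S t) (sl S (Suc t)))"
proof (induction k arbitrary: b)
  case 0
  then show ?case by (simp add: Qp_0 op_id_def)
next
  case (Suc k)
  have "prodn Vs A (Suc k) a b = (\<Sum>u\<in>basis Vs. prodn Vs A k a u * A k u b)"
    by (simp add: op_mult_def)
  also have "\<dots> = (\<Sum>u\<in>basis Vs. \<Sum>S\<in>Qp Vs k a u. (\<Prod>t<k. A t (sl S t) (sl S (Suc t))) * A k u b)"
    using Suc by (simp add: sum_distrib_right)
  also have "\<dots> = (\<Sum>(u,S)\<in>Sigma (basis Vs) (\<lambda>u. Qp Vs k a u). (\<Prod>t<k. A t (sl S t) (sl S (Suc t))) * A k u b)"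
    using fin by (intro sum.Sigma) (auto intro: finite_basis finite_Qp)
  also have "\<dots> = (\<Sum>S\<in>Qp Vs (Suc k) a b. \<Prod>t<Suc k. A t (sl S t) (sl S (Suc t)))"
  proof (rule sum.reindex_bij_witness[where i="\<lambda>S. (sl S k, cutp (Suc k) S)" and j="\<lambda>(u,S). extp (Suc k) b S"])
    fix x assume x: "x \<in> Sigma (basis Vs) (Qp Vs k a)"
    obtain u S where uS: "x = (u, S)" by (cases x)
    have S: "S \<in> basis ({..k} \<times> Vs)" "sl S 0 = a" "sl S k = u" using x uS by (auto simp: Qp_def)
    have SS: "S (Suc k, v) = False" for v using S(1) by (auto simp: basis_def)
    show "(sl ((\<lambda>(u,S). extp (Suc k) b S) x) k, cutp (Suc k) ((\<lambda>(u,S). extp (Suc k) b S) x)) = x"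
      using S SS uS by (auto simp: extp_def cutp_def sl_def fun_eq_iff)
    show "(\<lambda>(u,S). extp (Suc k) b S) x \<in> Qp Vs (Suc k) a b"
      using S Suc.prems(2) uS by (auto simp: Qp_def basis_def extp_def sl_def fun_eq_iff)
    show "(\<Prod>t<Suc k. A t (sl ((\<lambda>(u,S). extp (Suc k) b S) x) t) (sl ((\<lambda>(u,S). extp (Suc k) b S) x) (Suc t)))
        = (case x of (u, S) \<Rightarrow> (\<Prod>t<k. A t (sl S t) (sl S (Suc t))) * A k u b)"
    proof -
      have "(\<Prod>t<k. A t (sl (extp (Suc k) b S) t) (sl (extp (Suc k) b S) (Suc t))) = (\<Prod>t<k. A t (sl S t) (sl S (Suc t)))"
        by (intro prod.cong refl) (auto simp: sl_def extp_def)
      moreover have "sl (extp (Suc k) b S) k = u" "sl (extp (Suc k) b S) (Suc k) = b"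
        using S by (auto simp: sl_def extp_def)
      ultimately show ?thesis using uS by simp
    qed
  next
    fix S assume S: "S \<in> Qp Vs (Suc k) a b"
    have S1: "S \<in> basis ({..Suc k} \<times> Vs)" "sl S 0 = a" "sl S (Suc k) = b" using S by (auto simp: Qp_def)
    show "(\<lambda>(u,S). extp (Suc k) b S) (sl S k, cutp (Suc k) S) = S"
      using S1 by (auto simp: extp_def cutp_def sl_def fun_eq_iff)
    show "(sl S k, cutp (Suc k) S) \<in> Sigma (basis Vs) (Qp Vs k a)"
      using S1 by (auto simp: Qp_def basis_def cutp_def sl_def fun_eq_iff le_Suc_eq)
  qed
  finally show ?case .
qed


lemma trace_paths:
  assumes fin: "finite Vs" and n: "n \<ge> 1"
  shows "op_trace Vs (prodn Vs A n) = (\<Sum>S\<in>basis ({..<n} \<times> Vs). \<Prod>t<n. A t (sl S t) (sl S (Suc t mod n)))"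
proof -
  have "op_trace Vs (prodn Vs A n) = (\<Sum>a\<in>basis Vs. \<Sum>S\<in>Qp Vs n a a. \<Prod>t<n. A t (sl S t) (sl S (Suc t)))"
    unfolding op_trace_def using prodn_paths[OF fin] by simp
  also have "\<dots> = (\<Sum>(a,S)\<in>Sigma (basis Vs) (\<lambda>a. Qp Vs n a a). \<Prod>t<n. A t (sl S t) (sl S (Suc t)))"
    using fin by (intro sum.Sigma) (auto intro: finite_basis finite_Qp)
  also have "\<dots> = (\<Sum>S\<in>basis ({..<n} \<times> Vs). \<Prod>t<n. A t (sl S t) (sl S (Suc t mod n)))"
  proof (rule sum.reindex_bij_witness[where j="\<lambda>(a,S). cutp n S" and i="\<lambda>S. (sl S 0, extp n (sl S 0) S)"])
    fix x assume x: "x \<in> Sigma (basis Vs) (\<lambda>a. Qp Vs n a a)"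
    obtain a S where aS: "x = (a, S)" by (cases x)
    have S: "S \<in> basis ({..n} \<times> Vs)" "sl S 0 = a" "sl S n = a" using x aS by (auto simp: Qp_def)
    have n0: "n \<noteq> 0" using n by simp
    have c0: "sl (cutp n S) 0 = a" using S n0 by (simp add: sl_def cutp_def)
    show "(sl ((\<lambda>(a,S). cutp n S) x) 0, extp n (sl ((\<lambda>(a,S). cutp n S) x) 0) ((\<lambda>(a,S). cutp n S) x)) = x"
      using S c0 aS by (auto simp: extp_def cutp_def sl_def fun_eq_iff)
    show "(\<lambda>(a,S). cutp n S) x \<in> basis ({..<n} \<times> Vs)"
      using S aS by (auto simp: basis_def cutp_def)
    show "(\<Prod>t<n. A t (sl ((\<lambda>(a,S). cutp n S) x) t) (sl ((\<lambda>(a,S). cutp n S) x) (Suc t mod n)))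
       = (case x of (a, S) \<Rightarrow> \<Prod>t<n. A t (sl S t) (sl S (Suc t)))"
      unfolding aS split
    proof (intro prod.cong refl)
      fix t assume t: "t \<in> {..<n}"
      have "sl (cutp n S) t = sl S t" using t by (auto simp: sl_def cutp_def)
      moreover have "sl (cutp n S) (Suc t mod n) = sl S (Suc t)"
      proof (cases "Suc t < n")
        case True then show ?thesis by (auto simp: sl_def cutp_def)
      next
        case False
        then have "Suc t = n" using t by auto
        then show ?thesis using c0 S by simp
      qed
      ultimately show "A t (sl (cutp n S) t) (sl (cutp n S) (Suc t mod n)) = A t (sl S t) (sl S (Suc t))" by simp
    qed
  next
    fix S assume S: "S \<in> basis ({..<n} \<times> Vs)"
    have n0: "n \<noteq> 0" using n by simp
    show "(\<lambda>(a,S). cutp n S) (sl S 0, extp n (sl S 0) S) = S"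
      using S by (auto simp: extp_def cutp_def basis_def fun_eq_iff)
    show "(sl S 0, extp n (sl S 0) S) \<in> Sigma (basis Vs) (\<lambda>a. Qp Vs n a a)"
      using S n0 by (auto simp: Qp_def basis_def extp_def sl_def fun_eq_iff)
  qed
  finally show ?thesis .
qed



lemma conj_pow:
  assumes fin: "finite Vs" and WU: "eqB Vs (op_mult Vs W U) op_id" and UW: "eqB Vs (op_mult Vs U W) op_id"
  shows "eqB Vs (op_pow Vs (op_mult Vs U (op_mult Vs G W)) k) (op_mult Vs U (op_mult Vs (op_pow Vs G k) W))"
proof (induction k)
  case 0
  have "eqB Vs op_id (op_mult Vs U W)" using UW by (rule eqB_sym)
  also have "eqB Vs (op_mult Vs U W) (op_mult Vs U (op_mult Vs op_id W))"
    by (intro op_mult_cong eqB_refl eqB_sym[OF op_mult_id_left[OF fin]])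
  finally show ?case by simp
next
  case (Suc k)
  have "eqB Vs (op_pow Vs (op_mult Vs U (op_mult Vs G W)) (Suc k))
      (op_mult Vs (op_mult Vs U (op_mult Vs (op_pow Vs G k) W)) (op_mult Vs U (op_mult Vs G W)))"
    using Suc by (simp add: op_mult_cong)
  also have "\<dots> = op_mult Vs U (op_mult Vs (op_pow Vs G k) (op_mult Vs (op_mult Vs W U) (op_mult Vs G W)))"
    by (simp add: op_mult_assoc fin)
  also have "eqB Vs \<dots> (op_mult Vs U (op_mult Vs (op_pow Vs G k) (op_mult Vs op_id (op_mult Vs G W))))"
    by (intro op_mult_cong eqB_refl WU)
  also have "eqB Vs \<dots> (op_mult Vs U (op_mult Vs (op_pow Vs G k) (op_mult Vs G W)))"
    by (intro op_mult_cong eqB_refl op_mult_id_left fin)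
  also have "\<dots> = op_mult Vs U (op_mult Vs (op_pow Vs G (Suc k)) W)"
    by (simp add: op_mult_assoc fin)
  finally show ?case .
qed

lemma trace_conj:
  assumes fin: "finite Vs" and WU: "eqB Vs (op_mult Vs W U) op_id"
  shows "op_trace Vs (op_mult Vs U (op_mult Vs P W)) = op_trace Vs P"
proof -
  have "op_trace Vs (op_mult Vs U (op_mult Vs P W)) = op_trace Vs (op_mult Vs (op_mult Vs P W) U)"
    by (rule op_trace_comm)
  also have "\<dots> = op_trace Vs (op_mult Vs P (op_mult Vs W U))" by (simp add: op_mult_assoc fin)
  also have "\<dots> = op_trace Vs (op_mult Vs P op_id)"
    by (intro op_trace_cong op_mult_cong eqB_refl WU)
  also have "\<dots> = op_trace Vs P" by (intro op_trace_cong op_mult_id_right fin)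
  finally show ?thesis .
qed

lemma pow_prodn:
  assumes fin: "finite Vs" and per: "\<And>t. A (t + 3) = A t"
  shows "eqB Vs (op_pow Vs (op_mult Vs (A 0) (op_mult Vs (A 1) (A 2))) k) (prodn Vs A (3 * k))"
proof (induction k)
  case 0 then show ?case by simp
next
  case (Suc k)
  have per': "A (3 * k + j) = A j" for j
  proof (induction k)
    case 0 then show ?case by simp
  next
    case (Suc k)
    have "A (3 * Suc k + j) = A ((3 * k + j) + 3)" by (simp add: algebra_simps)
    then show ?case using per Suc by simp
  qed
  have "eqB Vs (op_pow Vs (op_mult Vs (A 0) (op_mult Vs (A 1) (A 2))) (Suc k))
     (op_mult Vs (prodn Vs A (3 * k)) (op_mult Vs (A 0) (op_mult Vs (A 1) (A 2))))"
    using Suc by (simp add: op_mult_cong)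
  also have "\<dots> = prodn Vs A (3 * Suc k)"
    using per'[of 0] per'[of 1] per'[of 2] by (simp add: op_mult_assoc fin numeral_3_eq_3)
  finally show ?case .
qed



definition dd :: "nat \<Rightarrow> nat \<Rightarrow> complex \<Rightarrow> complex \<Rightarrow> complex \<Rightarrow> nat \<Rightarrow> (vtx \<Rightarrow> bool) \<Rightarrow> complex" where
  "dd Lx Ly Kx Ky Kz t s = exp (coupling Kx Ky Kz (plane_type t) * hfun Lx Ly (plane_type t) s)"

definition Aop :: "nat \<Rightarrow> nat \<Rightarrow> complex \<Rightarrow> complex \<Rightarrow> complex \<Rightarrow> nat \<Rightarrow> vtx op" where
  "Aop Lx Ly Kx Ky Kz t = op_mult (verts Lx Ly) (diagop (dd Lx Ly Kx Ky Kz t)) (tens (verts Lx Ly) (\<lambda>_. Mm))"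

lemma plane_type_simps: "plane_type 0 = AX" "plane_type 1 = AY" "plane_type 2 = AZ" "plane_type (Suc 0) = AY"
  by (simp_all add: plane_type_def)

lemma plane_type_per: "plane_type (t + 3) = plane_type t"
  by (simp add: plane_type_def)

lemma dd_per: "dd Lx Ly Kx Ky Kz (t + 3) = dd Lx Ly Kx Ky Kz t"
  by (simp add: dd_def plane_type_per fun_eq_iff)

lemma dd_0: "dd Lx Ly Kx Ky Kz 0 = (\<lambda>s. exp (Kx * hfun Lx Ly AX s))"
  and dd_1: "dd Lx Ly Kx Ky Kz 1 = (\<lambda>s. exp (Ky * hfun Lx Ly AY s))"
  and dd_2: "dd Lx Ly Kx Ky Kz 2 = (\<lambda>s. exp (Kz * hfun Lx Ly AZ s))"
  by (simp_all add: dd_def fun_eq_iff plane_type_simps coupling_def)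

lemma dd_1': "dd Lx Ly Kx Ky Kz (Suc 0) = (\<lambda>s. exp (Ky * hfun Lx Ly AY s))"
  using dd_1 by simp

lemma Aop_per: "Aop Lx Ly Kx Ky Kz (t + 3) = Aop Lx Ly Kx Ky Kz t"
  by (simp add: Aop_def dd_per)

lemma WU_M: "op_mult Vs (Wo Vs AX) (Uo Vs AY) = tens Vs (\<lambda>_. Mm)"
            "op_mult Vs (Wo Vs AY) (Uo Vs AZ) = tens Vs (\<lambda>_. Mm)"
            "op_mult Vs (Wo Vs AZ) (Uo Vs AX) = tens Vs (\<lambda>_. Mm)"
  if "finite Vs"
  using that by (simp_all add: Wo_def Uo_def tens_mult uf_def o1 o2 o3)

lemma trace_transfer:
  assumes Lx: "Lx \<ge> 1" and Ly: "Ly \<ge> 1"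
  shows "op_trace (verts Lx Ly) (op_pow (verts Lx Ly) (transfer Lx Ly Kx Ky Kz) M)
       = op_trace (verts Lx Ly) (prodn (verts Lx Ly) (Aop Lx Ly Kx Ky Kz) (3 * M))"
proof -
  let ?V = "verts Lx Ly"
  have fin: "finite ?V" by (rule finite_verts)
  define Ux where "Ux = Uo ?V AX"
  define Uy where "Uy = Uo ?V AY"
  define Uz where "Uz = Uo ?V AZ"
  define Wx where "Wx = Wo ?V AX"
  define Wy where "Wy = Wo ?V AY"
  define Wz where "Wz = Wo ?V AZ"
  define Dx where "Dx = diagop (dd Lx Ly Kx Ky Kz 0)"
  define Dy where "Dy = diagop (dd Lx Ly Kx Ky Kz 1)"
  define Dz where "Dz = diagop (dd Lx Ly Kx Ky Kz 2)"
  let ?m = "op_mult ?V"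
  define X where "X = ?m (?m (?m (?m Ux Dx) Wx) (?m (?m Uy Dy) Wy)) (?m (?m Uz Dz) Wz)"
  define G where "G = ?m (Aop Lx Ly Kx Ky Kz 0) (?m (Aop Lx Ly Kx Ky Kz 1) (Aop Lx Ly Kx Ky Kz 2))"
  have ex: "eqB ?V (op_exp ?V (op_scale Kx (link_sum Lx Ly AX))) (?m (?m Ux Dx) Wx)"
    using exp_term[OF Lx Ly, of Kx AX]
    by (simp add: UDW_mult fin Ux_def Wx_def Dx_def dd_0 dd_1 dd_1' dd_2)
  have ey: "eqB ?V (op_exp ?V (op_scale Ky (link_sum Lx Ly AY))) (?m (?m Uy Dy) Wy)"
    using exp_term[OF Lx Ly, of Ky AY]
    by (simp add: UDW_mult fin Uy_def Wy_def Dy_def dd_0 dd_1 dd_1' dd_2)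
  have ez: "eqB ?V (op_exp ?V (op_scale Kz (link_sum Lx Ly AZ))) (?m (?m Uz Dz) Wz)"
    using exp_term[OF Lx Ly, of Kz AZ]
    by (simp add: UDW_mult fin Uz_def Wz_def Dz_def dd_0 dd_1 dd_1' dd_2)
  have T1: "eqB ?V (transfer Lx Ly Kx Ky Kz) X"
    unfolding transfer_def Let_def X_def by (intro op_mult_cong ex ey ez)
  have A0: "Aop Lx Ly Kx Ky Kz 0 = ?m Dx (?m Wx Uy)"
    using WU_M[OF fin] by (simp add: Aop_def Dx_def Wx_def Uy_def)
  have A1: "Aop Lx Ly Kx Ky Kz 1 = ?m Dy (?m Wy Uz)"
    using WU_M[OF fin] by (simp add: Aop_def Dy_def Wy_def Uz_def)
  have A2: "Aop Lx Ly Kx Ky Kz 2 = ?m Dz (?m Wz Ux)"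
    using WU_M[OF fin] by (simp add: Aop_def Dz_def Wz_def Ux_def)
  have UW: "eqB ?V (?m Ux Wx) op_id" unfolding Ux_def Wx_def by (rule UW_id[OF fin])
  have WU: "eqB ?V (?m Wx Ux) op_id" unfolding Ux_def Wx_def by (rule WU_id[OF fin])
  have "eqB ?V (transfer Lx Ly Kx Ky Kz) X" by (rule T1)
  also have "eqB ?V X (?m X op_id)" by (rule eqB_sym[OF op_mult_id_right[OF fin]])
  also have "eqB ?V (?m X op_id) (?m X (?m Ux Wx))" by (intro op_mult_cong eqB_refl eqB_sym[OF UW])
  also have "?m X (?m Ux Wx) = ?m Ux (?m G Wx)"
    unfolding X_def G_def A0 A1 A2 by (simp add: op_mult_assoc fin)
  finally have T2: "eqB ?V (transfer Lx Ly Kx Ky Kz) (?m Ux (?m G Wx))" .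
  have "op_trace ?V (op_pow ?V (transfer Lx Ly Kx Ky Kz) M) = op_trace ?V (op_pow ?V (?m Ux (?m G Wx)) M)"
    by (intro op_trace_cong op_pow_cong T2)
  also have "\<dots> = op_trace ?V (?m Ux (?m (op_pow ?V G M) Wx))"
    by (intro op_trace_cong conj_pow fin WU UW)
  also have "\<dots> = op_trace ?V (op_pow ?V G M)"
    by (intro trace_conj fin WU)
  also have "\<dots> = op_trace ?V (prodn ?V (Aop Lx Ly Kx Ky Kz) (3 * M))"
    unfolding G_def by (intro op_trace_cong pow_prodn fin Aop_per)
  finally show ?thesis .
qed



definition c0 :: complex where "c0 = (-1 + \<i>) / 2"

lemma exp_pi4: "exp (pi * \<i> / 2) = \<i>" "exp (- (pi * \<i> / 4)) = (1 - \<i>) / q"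
proof -
  show "exp (pi * \<i> / 2) = \<i>"
    using exp_Euler[of "pi/2"] by (simp add: mult.commute)
  have "exp (- (pi * \<i> / 4)) = exp (\<i> * complex_of_real (- (pi / 4)))" by (simp add: mult.commute)
  also have "\<dots> = cis (- (pi / 4))" by (simp add: cis_conv_exp)
  also have "\<dots> = (1 - \<i>) / q"
    by (simp add: complex_eq_iff cos_45 sin_45 q_def Re_divide_of_real Im_divide_of_real real_div_sqrt)
  finally show "exp (- (pi * \<i> / 4)) = (1 - \<i>) / q" .
qed

lemma Mm_exp: "Mm x y = c0 * exp (pi * \<i> / 4 * (sgc x * sgc y) - pi * \<i> / 8 * (sgc x + sgc y))"
proof -
  have a: "pi * \<i> / 4 * (sgc x * sgc y) - pi * \<i> / 8 * (sgc x + sgc y) =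
    (if x = y then (if x then pi * \<i> / 2 else 0) else - (pi * \<i> / 4))"
    by (auto simp: sgc_def field_simps)
  have e: "exp (if x = y then (if x then pi * \<i> / 2 else 0) else - (pi * \<i> / 4)) =
     (if x = y then (if x then \<i> else 1) else (1 - \<i>) / q)"
    by (simp only: if_distrib[of exp] exp_pi4 exp_zero)
  show ?thesis unfolding a e
    by (auto simp: Mm_def c0_def field_simps q_sq q_sq2)
qed


lemma Aop_entry:
  assumes "a \<in> basis (verts Lx Ly)"
  shows "Aop Lx Ly Kx Ky Kz t a b = dd Lx Ly Kx Ky Kz t a * (\<Prod>v\<in>verts Lx Ly. Mm (a v) (b v))"
proof -
  have "Aop Lx Ly Kx Ky Kz t a b = (\<Sum>u\<in>basis (verts Lx Ly). if a = u then dd Lx Ly Kx Ky Kz t a * tens (verts Lx Ly) (\<lambda>_. Mm) a b else 0)"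
    unfolding Aop_def op_mult_def diagop_def by (intro sum.cong refl) auto
  also have "\<dots> = dd Lx Ly Kx Ky Kz t a * tens (verts Lx Ly) (\<lambda>_. Mm) a b"
    using assms finite_basis[OF finite_verts] by simp
  finally show ?thesis by (simp add: tens_def)
qed

lemma sum_shift_mod:
  assumes "n \<ge> 1"
  shows "(\<Sum>t<n. f (Suc t mod n)) = (\<Sum>t<n. (f t :: complex))"
proof -
  obtain m where n: "n = Suc m" using assms by (cases n) auto
  have "(\<Sum>t<Suc m. f (Suc t mod Suc m)) = (\<Sum>t<m. f (Suc t mod Suc m)) + f (Suc m mod Suc m)"
    by simp
  also have "(\<Sum>t<m. f (Suc t mod Suc m)) = (\<Sum>t<m. f (Suc t))"
    by (intro sum.cong refl) auto
  also have "(\<Sum>t<m. f (Suc t)) + f (Suc m mod Suc m) = (\<Sum>t<Suc m. f t)"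
    by (subst sum.lessThan_Suc_shift) (simp add: add.commute)
  finally show ?thesis using n by simp
qed

definition tosig :: "(nat \<times> vtx \<Rightarrow> bool) \<Rightarrow> nat \<times> vtx \<Rightarrow> int" where
  "tosig S p = (if S p then -1 else 1)"

lemma of_int_tosig: "(of_int (tosig S p) :: complex) = sgc (S p)"
  by (simp add: tosig_def sgc_def)

lemma of_int_tosig2: "(of_int (tosig S p * tosig S p') :: complex) = sgc (S p) * sgc (S p')"
  by (simp add: tosig_def sgc_def)

lemma card_verts: "card (verts Lx Ly) = 4 * (Lx * Ly)"
proof -
  have "verts Lx Ly = {..<Lx} \<times> {..<Ly} \<times> {..<4}" by (auto simp: verts_def)
  then show ?thesis by (simp add: card_cartesian_product)
qed

lemma sites_eq: "sites Lx Ly M = {..<3*M} \<times> verts Lx Ly" by (simp add: sites_def)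

lemma term_eq:
  assumes M: "M \<ge> 1" and S: "S \<in> basis ({..<3*M} \<times> verts Lx Ly)"
  shows "(\<Prod>t<3*M. Aop Lx Ly Kx Ky Kz t (sl S t) (sl S (Suc t mod (3*M))))
     = c0 ^ (12 * M * (Lx * Ly)) * exp (energy Lx Ly M Kx Ky Kz (pi * \<i> / 4) (pi * \<i> / 4) (tosig S))"
proof -
  let ?n = "3*M" and ?V = "verts Lx Ly"
  define g where "g t v = sgc (S (t, v))" for t v
  define w where "w t v = pi * \<i> / 4 * (g t v * g (Suc t mod ?n) v) - pi * \<i> / 8 * (g t v + g (Suc t mod ?n) v)" for t v
  define E1 where "E1 = (\<Sum>t<?n. coupling Kx Ky Kz (plane_type t) * hfun Lx Ly (plane_type t) (sl S t))"
  have slb: "sl S t \<in> basis ?V" for t using S by (auto simp: sl_def basis_def)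
  have "(\<Prod>t<?n. Aop Lx Ly Kx Ky Kz t (sl S t) (sl S (Suc t mod ?n)))
      = (\<Prod>t<?n. dd Lx Ly Kx Ky Kz t (sl S t) * (\<Prod>v\<in>?V. c0 * exp (w t v)))"
    by (intro prod.cong refl, simp only: Aop_entry[OF slb]) (simp add: Mm_exp w_def g_def sl_def)
  also have "\<dots> = exp E1 * (c0 ^ (?n * card ?V) * exp (\<Sum>t<?n. \<Sum>v\<in>?V. w t v))"
    by (simp add: prod.distrib exp_sum finite_verts E1_def dd_def flip: power_mult)
       (simp add: mult.commute)
  also have "(\<Sum>t<?n. \<Sum>v\<in>?V. w t v) = pi * \<i> / 4 * (\<Sum>t<?n. \<Sum>v\<in>?V. g t v * g (Suc t mod ?n) v)
       - pi * \<i> / 8 * ((\<Sum>t<?n. \<Sum>v\<in>?V. g t v) + (\<Sum>t<?n. \<Sum>v\<in>?V. g (Suc t mod ?n) v))"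
    by (simp add: w_def sum_subtractf sum.distrib sum_distrib_left distrib_left)
  also have "(\<Sum>t<?n. \<Sum>v\<in>?V. g (Suc t mod ?n) v) = (\<Sum>t<?n. \<Sum>v\<in>?V. g t v)"
    using M by (intro sum_shift_mod[where f="\<lambda>t. \<Sum>v\<in>?V. g t v"]) simp
  also have "exp E1 * (c0 ^ (?n * card ?V) * exp (pi * \<i> / 4 * (\<Sum>t<?n. \<Sum>v\<in>?V. g t v * g (Suc t mod ?n) v)
       - pi * \<i> / 8 * ((\<Sum>t<?n. \<Sum>v\<in>?V. g t v) + (\<Sum>t<?n. \<Sum>v\<in>?V. g t v))))
     = c0 ^ (?n * card ?V) * exp (E1 + pi * \<i> / 4 * (\<Sum>t<?n. \<Sum>v\<in>?V. g t v * g (Suc t mod ?n) v)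
       - pi * \<i> / 4 * (\<Sum>t<?n. \<Sum>v\<in>?V. g t v))"
  proof -
    let ?A = "(\<Sum>t<?n. \<Sum>v\<in>?V. g t v * g (Suc t mod ?n) v)" and ?B = "(\<Sum>t<?n. \<Sum>v\<in>?V. g t v)"
    have "E1 + pi * \<i> / 4 * ?A - pi * \<i> / 4 * ?B = E1 + (pi * \<i> / 4 * ?A - pi * \<i> / 8 * (?B + ?B))"
      by (simp add: field_simps)
    then show ?thesis by (simp only: exp_add mult_ac)
  qed
  also have "E1 + pi * \<i> / 4 * (\<Sum>t<?n. \<Sum>v\<in>?V. g t v * g (Suc t mod ?n) v)
       - pi * \<i> / 4 * (\<Sum>t<?n. \<Sum>v\<in>?V. g t v) = energy Lx Ly M Kx Ky Kz (pi * \<i> / 4) (pi * \<i> / 4) (tosig S)"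
  proof -
    have e1: "E1 = (\<Sum>t<?n. coupling Kx Ky Kz (plane_type t) *
        (\<Sum>(v,w)\<in>links Lx Ly (plane_type t). of_int (tosig S (t,v) * tosig S (t,w))))"
      unfolding E1_def hfun_def by (simp add: of_int_tosig2 of_int_tosig sl_def case_prod_beta)
    have e2: "(\<Sum>t<?n. \<Sum>v\<in>?V. g t v * g (Suc t mod ?n) v) = (\<Sum>t<?n. \<Sum>v\<in>?V. of_int (tosig S (t,v) * tosig S ((t + 1) mod ?n, v)))"
      by (simp add: of_int_tosig2 of_int_tosig g_def)
    have e3: "(\<Sum>t<?n. \<Sum>v\<in>?V. g t v) = (\<Sum>i\<in>sites Lx Ly M. of_int (tosig S i))"
      unfolding sites_eq by (simp add: sum.cartesian_product of_int_tosig g_def case_prod_beta)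
    show ?thesis unfolding energy_def e1 e2 e3 by simp
  qed
  finally show ?thesis by (simp add: card_verts algebra_simps)
qed



lemma exp_int_mult_1:
  fixes z :: complex
  assumes "exp z = 1"
  shows "exp (of_int k * z) = 1"
proof (cases k rule: int_cases)
  case (nonneg n)
  have "exp (of_nat n * z) = exp z ^ n" by (rule exp_of_nat_mult)
  then show ?thesis using assms nonneg by simp
next
  case (neg n)
  have kk: "(of_int k :: complex) = - of_nat (Suc n)" using neg by simp
  have "of_int k * z = - (of_nat (Suc n) * z)" by (simp add: kk algebra_simps)
  then have "exp (of_int k * z) = inverse (exp (of_nat (Suc n) * z))"
    by (simp only: exp_minus)
  moreover have "exp (of_nat (Suc n) * z) = exp z ^ Suc n" by (rule exp_of_nat_mult)
  ultimately show ?thesis using assms by simp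
qed

lemma exp_half_pm: "x \<in> {-1, 1} \<Longrightarrow> exp (pi * \<i> / 2 * of_int x) = \<i> * of_int x"
proof -
  assume x: "x \<in> {-1, 1}"
  have e1: "exp (pi * \<i> / 2) = \<i>" by (rule exp_pi4(1))
  have e2: "exp (- (pi * \<i> / 2)) = - \<i>"
    using e1 by (simp add: exp_minus)
  show ?thesis using x e1 e2 by auto
qed

lemma exp_half_pm2:
  assumes a: "a \<in> {-1, 1}" and b: "b \<in> {-1, 1::int}"
  shows "exp (complex_of_real pi * \<i> * (complex_of_int a * complex_of_int b) / 2) = \<i> * (complex_of_int a * complex_of_int b)"
proof -
  have "a * b \<in> {-1, 1}" using a b by auto
  from exp_half_pm[OF this] show ?thesis by (simp add: mult_ac)
qed

lemma exp_pi_pm: "x \<in> {-1, 1} \<Longrightarrow> exp (pi * \<i> * of_int x) = -1"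
proof -
  assume x: "x \<in> {-1, 1}"
  have e1: "exp (pi * \<i>) = -1" by simp
  have e2: "exp (- (pi * \<i>)) = -1" using e1 by (simp add: exp_minus)
  show ?thesis using x e1 e2 by auto
qed

lemma prod_shift_mod:
  assumes "n \<ge> 1"
  shows "(\<Prod>t<n. f (Suc t mod n)) = (\<Prod>t<n. (f t :: complex))"
proof -
  obtain m where n: "n = Suc m" using assms by (cases n) auto
  have "(\<Prod>t<Suc m. f (Suc t mod Suc m)) = (\<Prod>t<m. f (Suc t mod Suc m)) * f (Suc m mod Suc m)"
    by simp
  also have "(\<Prod>t<m. f (Suc t mod Suc m)) = (\<Prod>t<m. f (Suc t))"
    by (intro prod.cong refl) auto
  also have "(\<Prod>t<m. f (Suc t)) * f (Suc m mod Suc m) = (\<Prod>t<Suc m. f t)"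
    by (subst prod.lessThan_Suc_shift) (simp add: mult.commute)
  finally show ?thesis using n by simp
qed

lemma i_pow_12: "\<i> ^ (12 * m) = 1"
proof -
  have "\<i> ^ (12 * m) = (\<i> ^ 4) ^ (3 * m)" by (simp flip: power_mult)
  then show ?thesis by simp
qed

lemma energy_invariant:
  assumes M: "M \<ge> 1" and sig: "\<sigma> \<in> spin_configs Lx Ly M"
    and hJ: "\<exists>k::int. 4 * bJ = pi * \<i> + 2 * pi * \<i> * of_int k"
    and hh: "\<exists>k::int. 2 * bh = pi * \<i> / 2 + 2 * pi * \<i> * of_int k"
  shows "exp (energy Lx Ly M Kx Ky Kz bJ bh \<sigma>) = exp (energy Lx Ly M Kx Ky Kz (pi * \<i> / 4) (pi * \<i> / 4) \<sigma>)"
proof -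
  let ?n = "3*M" and ?V = "verts Lx Ly"
  obtain k :: int where k: "4 * bJ = pi * \<i> + 2 * pi * \<i> * of_int k" using hJ by blast
  obtain k' :: int where k': "2 * bh = pi * \<i> / 2 + 2 * pi * \<i> * of_int k'" using hh by blast
  have bJ: "bJ = pi * \<i> / 4 + of_int k * (pi * \<i> / 2)" using k by (simp add: field_simps)
  have bh: "bh = pi * \<i> / 4 + of_int k' * (pi * \<i>)" using k' by (simp add: field_simps)
  define A where "A = (\<Sum>t<?n. \<Sum>v\<in>?V. (of_int (\<sigma> (t,v) * \<sigma> ((t + 1) mod ?n, v)) :: complex))"
  define B where "B = (\<Sum>i\<in>sites Lx Ly M. (of_int (\<sigma> i) :: complex))"
  have pm: "\<sigma> (t, v) \<in> {-1, 1}" if "t < ?n" "v \<in> ?V" for t v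
    using sig that by (auto simp: spin_configs_def sites_def)
  have eA: "exp (pi * \<i> / 2 * A) = 1"
  proof -
    have "exp (pi * \<i> / 2 * A) = (\<Prod>t<?n. \<Prod>v\<in>?V. \<i> * (of_int (\<sigma> (t,v)) * of_int (\<sigma> (Suc t mod ?n, v))))"
      unfolding A_def sum_distrib_left
      using M by (simp add: exp_sum finite_verts) (intro prod.cong refl exp_half_pm2 pm, auto)
    also have "\<dots> = \<i> ^ (card ?V * ?n) * (\<Prod>v\<in>?V. (\<Prod>t<?n. of_int (\<sigma> (t,v))) * (\<Prod>t<?n. of_int (\<sigma> (Suc t mod ?n, v))))"
    proof -
      have "(\<Prod>t<?n. \<Prod>v\<in>?V. \<i> * (of_int (\<sigma> (t,v)) * of_int (\<sigma> (Suc t mod ?n, v))))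
          = (\<Prod>t<?n. \<Prod>v\<in>?V. \<i>) * ((\<Prod>t<?n. \<Prod>v\<in>?V. (of_int (\<sigma> (t,v)) :: complex)) * (\<Prod>t<?n. \<Prod>v\<in>?V. (of_int (\<sigma> (Suc t mod ?n, v)) :: complex)))"
        by (simp only: prod.distrib)
      also have "(\<Prod>t<?n. \<Prod>v\<in>?V. \<i>) = \<i> ^ (card ?V * ?n)"
        by (simp add: power_mult)
      also have "(\<Prod>t<?n. \<Prod>v\<in>?V. (of_int (\<sigma> (t,v)) :: complex)) = (\<Prod>v\<in>?V. \<Prod>t<?n. of_int (\<sigma> (t,v)))"
        by (rule prod.swap)
      also have "(\<Prod>t<?n. \<Prod>v\<in>?V. (of_int (\<sigma> (Suc t mod ?n, v)) :: complex)) = (\<Prod>v\<in>?V. \<Prod>t<?n. of_int (\<sigma> (Suc t mod ?n, v)))"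
        by (rule prod.swap)
      finally show ?thesis by (simp only: prod.distrib)
    qed
    also have "\<dots> = \<i> ^ (card ?V * ?n) * (\<Prod>v\<in>?V. (\<Prod>t<?n. (of_int (\<sigma> (t,v)) * of_int (\<sigma> (t,v)) :: complex)))"
      using M by (simp add: prod_shift_mod[where f="\<lambda>t. of_int (\<sigma> (t, _))"] prod.distrib)
    also have "\<dots> = 1"
    proof -
      have "(\<Prod>v\<in>?V. (\<Prod>t<?n. (of_int (\<sigma> (t,v)) * of_int (\<sigma> (t,v)) :: complex))) = 1"
      proof (intro prod.neutral ballI)
        fix v t assume "v \<in> ?V" "t \<in> {..<?n}"
        then have "\<sigma> (t, v) \<in> {-1, 1}" using pm by auto
        then show "(of_int (\<sigma> (t,v)) * of_int (\<sigma> (t,v)) :: complex) = 1" by auto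
      qed
      moreover have "\<i> ^ (card ?V * ?n) = 1"
        using i_pow_12[of "M * (Lx * Ly)"] by (simp add: card_verts algebra_simps)
      ultimately show ?thesis by simp
    qed
    finally show ?thesis .
  qed
  have eB: "exp (pi * \<i> * B) = 1"
  proof -
    have fs: "finite (sites Lx Ly M)" by (simp add: sites_def finite_verts)
    have "exp (pi * \<i> * B) = (\<Prod>i\<in>sites Lx Ly M. exp (pi * \<i> * of_int (\<sigma> i)))"
      unfolding B_def sum_distrib_left using fs by (simp add: exp_sum)
    also have "\<dots> = (\<Prod>i\<in>sites Lx Ly M. -1)"
      using sig by (intro prod.cong refl exp_pi_pm) (auto simp: spin_configs_def)
    also have "\<dots> = (-1) ^ (2 * (6 * M * (Lx * Ly)))"
      by (simp add: sites_def card_cartesian_product card_verts)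
    also have "\<dots> = 1" by (simp add: power_mult)
    finally show ?thesis .
  qed
  have eq: "energy Lx Ly M Kx Ky Kz bJ bh \<sigma> = energy Lx Ly M Kx Ky Kz (pi * \<i> / 4) (pi * \<i> / 4) \<sigma>
      + (of_int k * (pi * \<i> / 2 * A) + of_int (- k') * (pi * \<i> * B))"
    unfolding energy_def A_def B_def bJ bh by (simp add: algebra_simps)
  have x1: "exp (of_int k * (pi * \<i> / 2 * A)) = 1" by (rule exp_int_mult_1[OF eA])
  have x2: "exp (of_int (- k') * (pi * \<i> * B)) = 1" by (rule exp_int_mult_1[OF eB])
  show ?thesis unfolding eq by (simp only: exp_add x1 x2 mult_1_right)
qed



definition fromsig :: "nat \<Rightarrow> nat \<Rightarrow> nat \<Rightarrow> (nat \<times> vtx \<Rightarrow> int) \<Rightarrow> nat \<times> vtx \<Rightarrow> bool" where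
  "fromsig Lx Ly M \<sigma> = (\<lambda>p. p \<in> sites Lx Ly M \<and> \<sigma> p = -1)"

lemma sum_configs:
  "(\<Sum>S\<in>basis (sites Lx Ly M). f (tosig S)) = (\<Sum>\<sigma>\<in>spin_configs Lx Ly M. f \<sigma>)"
proof (rule sum.reindex_bij_witness[where j=tosig and i="fromsig Lx Ly M"])
  fix S assume S: "S \<in> basis (sites Lx Ly M)"
  show "fromsig Lx Ly M (tosig S) = S"
    using S by (auto simp: fromsig_def tosig_def basis_def fun_eq_iff)
  show "tosig S \<in> spin_configs Lx Ly M"
    using S by (auto simp: spin_configs_def tosig_def basis_def)
  show "f (tosig S) = f (tosig S)" ..
next
  fix \<sigma> assume s: "\<sigma> \<in> spin_configs Lx Ly M"
  show "tosig (fromsig Lx Ly M \<sigma>) = \<sigma>"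
    using s by (auto simp: fromsig_def tosig_def spin_configs_def fun_eq_iff)
  show "fromsig Lx Ly M \<sigma> \<in> basis (sites Lx Ly M)"
    by (auto simp: fromsig_def basis_def)
qed

lemma c0_val: "complex_of_real (1 / sqrt 2) * exp (3 * pi * \<i> / 4) = c0"
proof -
  have e: "exp (3 * pi * \<i> / 4) = cis (3 * pi / 4)" by (simp add: cis_conv_exp mult_ac)
  have a: "3 * pi / 4 = pi - pi / 4" by linarith
  have c: "cos (3 * pi / 4) = - (sqrt 2 / 2)" by (simp only: a cos_pi_minus cos_45)
  have s: "sin (3 * pi / 4) = sqrt 2 / 2" by (simp only: a sin_pi_minus sin_45)
  have r: "1 / sqrt 2 * (sqrt 2 / 2) = (1/2 :: real)" by (simp add: field_simps)
  show ?thesis unfolding e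
    by (simp only: complex_eq_iff times_complex.sel Re_complex_of_real Im_complex_of_real cis.sel c s)
       (simp add: c0_def r)
qed

lemma c0_nz: "c0 \<noteq> 0" by (simp add: c0_def complex_eq_iff)

theorem mainTheorem3:
  "\<exists>C :: nat \<Rightarrow> nat \<Rightarrow> complex \<Rightarrow> complex \<Rightarrow> complex.
     (\<forall>Lx Ly M Kx Ky Kz bJ bh.
        Lx \<ge> 1 \<longrightarrow> Ly \<ge> 1 \<longrightarrow> M \<ge> 1 \<longrightarrow>
        (\<exists>k::int. 4 * bJ = pi * \<i> + 2 * pi * \<i> * of_int k) \<longrightarrow>
        (\<exists>k::int. 2 * bh = pi * \<i> / 2 + 2 * pi * \<i> * of_int k) \<longrightarrow>
        C M (Lx * Ly) bJ bh \<noteq> 0 \<and>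
        op_trace (verts Lx Ly) (op_pow (verts Lx Ly) (transfer Lx Ly Kx Ky Kz) M)
          = C M (Lx * Ly) bJ bh * partition_fn Lx Ly M Kx Ky Kz bJ bh)
   \<and> (\<forall>M N. M \<ge> 1 \<longrightarrow> N \<ge> 1 \<longrightarrow>
        C M N (pi * \<i> / 4) (pi * \<i> / 4)
          = (complex_of_real (1 / sqrt 2) * exp (3 * pi * \<i> / 4)) ^ (12 * M * N))"
proof (intro exI[where x="\<lambda>M N bJ bh. c0 ^ (12 * M * N)"] conjI allI impI)
  fix M N :: nat
  show "c0 ^ (12 * M * N) = (complex_of_real (1 / sqrt 2) * exp (3 * pi * \<i> / 4)) ^ (12 * M * N)"
    by (simp only: c0_val)
next
  fix Lx Ly M :: nat and Kx Ky Kz bJ bh :: complex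
  show "c0 ^ (12 * M * (Lx * Ly)) \<noteq> 0" by (simp add: c0_nz)
next
  fix Lx Ly M :: nat and Kx Ky Kz bJ bh :: complex
  assume Lx: "Lx \<ge> 1" and Ly: "Ly \<ge> 1" and M: "M \<ge> 1"
    and hJ: "\<exists>k::int. 4 * bJ = pi * \<i> + 2 * pi * \<i> * of_int k"
    and hh: "\<exists>k::int. 2 * bh = pi * \<i> / 2 + 2 * pi * \<i> * of_int k"
  let ?V = "verts Lx Ly"
  have "op_trace ?V (op_pow ?V (transfer Lx Ly Kx Ky Kz) M) = op_trace ?V (prodn ?V (Aop Lx Ly Kx Ky Kz) (3 * M))"
    by (rule trace_transfer[OF Lx Ly])
  also have "\<dots> = (\<Sum>S\<in>basis ({..<3*M} \<times> ?V). \<Prod>t<3*M. Aop Lx Ly Kx Ky Kz t (sl S t) (sl S (Suc t mod (3*M))))"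
    using M by (intro trace_paths finite_verts) simp
  also have "\<dots> = (\<Sum>S\<in>basis (sites Lx Ly M). c0 ^ (12 * M * (Lx * Ly)) * exp (energy Lx Ly M Kx Ky Kz (pi * \<i> / 4) (pi * \<i> / 4) (tosig S)))"
    unfolding sites_eq using M by (intro sum.cong refl term_eq)
  also have "\<dots> = (\<Sum>\<sigma>\<in>spin_configs Lx Ly M. c0 ^ (12 * M * (Lx * Ly)) * exp (energy Lx Ly M Kx Ky Kz (pi * \<i> / 4) (pi * \<i> / 4) \<sigma>))"
    by (rule sum_configs)
  also have "\<dots> = (\<Sum>\<sigma>\<in>spin_configs Lx Ly M. c0 ^ (12 * M * (Lx * Ly)) * exp (energy Lx Ly M Kx Ky Kz bJ bh \<sigma>))"
    using energy_invariant[OF M _ hJ hh] by (intro sum.cong refl) simp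
  also have "\<dots> = c0 ^ (12 * M * (Lx * Ly)) * partition_fn Lx Ly M Kx Ky Kz bJ bh"
    by (simp add: partition_fn_def sum_distrib_left)
  finally show "op_trace ?V (op_pow ?V (transfer Lx Ly Kx Ky Kz) M) = c0 ^ (12 * M * (Lx * Ly)) * partition_fn Lx Ly M Kx Ky Kz bJ bh" .
qed


end
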